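(* Let $n\ge 1$ be an integer, let $C_t$ be a Liu process, and let $f,g:[0,\infty)\times\mathbb{R}^{n}\to\mathbb{R}$ be continuous functions. Let $X_t$ be a solution of the $n$-th order uncertain differential equation $$X_t^{(n)}=f\big(t,X_t,X_t^{(1)},\dots,X_t^{(n-1)}\big)+g\big(t,X_t,X_t^{(1)},\dots,X_t^{(n-1)}\big)\dot{C}_t$$ with initial conditions $X^{(k)}_0=X_0^{k}$ for $k=0,1,\dots,n-1$ (where $X_0^k$ are given real numbers). Then for every $t\ge 0$, $$X_t=\sum_{k=0}^{n-1}\frac{t^k}{k!}X_0^{k}+\frac{1}{(n-1)!}\int_{0}^{t}(t-s)^{n-1}f\big(s,X_s,X_s^{(1)},\dots,X_s^{(n-1)}\big)\,{\rm d}s+\frac{1}{(n-1)!}\int_{0}^{t}(t-s)^{n-1}g\big(s,X_s,X_s^{(1)},\dots,X_s^{(n-1)}\big)\,{\rm d}C_s,$$ where the last integral is a Liu integral.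
   Context: An uncertainty space is a triple $(\Gamma,\mathcal{L},\mathcal{M})$ where $\Gamma$ is a nonempty set, $\mathcal{L}$ a $\sigma$-algebra on $\Gamma$ and $\mathcal{M}$ an uncertain measure (in the sense of Liu's uncertainty theory). A Liu process $C_t$ is an uncertain process with $C_0=0$, almost all sample paths Lipschitz continuous, stationary and independent increments, and each increment $C_{s+t}-C_s$ a normal uncertain variable with expected value $0$ and variance $t^2$. For an uncertain process $Z_t$, the Liu integral is $\int_0^a Z_t\,{\rm d}C_t=\lim_{\Delta\to0}\sum_{i=1}^k Z_{t_i}(C_{t_{i+1}}-C_{t_i})$ over partitions $0=t_1<\dots<t_{k+1}=a$ with mesh $\Delta=\max_i|t_{i+1}-t_i|$, provided the limit exists almost surely and is finite. $\dot C_t$ denotes the formal derivative ${\rm d}C_t/{\rm d}t$. An uncertain process $X_t$ is called a solution of the $n$-th order uncertain differential equation above with initial values $X_0^k$ (the value of the $k$-th derivative at $0$, $X_0^0=X_0$) if it satisfies the uncertain integral equation $$X_t=\sum_{i=0}^{n-1}\frac{t^i}{i!}X_0^{i}+\int_0^t\int_0^{t_1}\!\!\cdots\int_0^{t_{n-1}} f\big(t_n,X_{t_n},\dots,X^{(n-1)}_{t_n}\big)\,{\rm d}t_n\,{\rm d}t_{n-1}\cdots{\rm d}t_1+\int_0^t\int_0^{t_1}\!\!\cdots\int_0^{t_{n-1}} g\big(t_n,X_{t_n},\dots,X^{(n-1)}_{t_n}\big)\,{\rm d}C_{t_n}\,{\rm d}t_{n-1}\cdots{\rm d}t_1$$ for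 all $t\ge0$, where $X^{(k)}$ denotes the $k$-th derivative in $t$. *)

theory Defs
  imports "HOL-Analysis.Analysis"
begin

definition uncertain_measure :: "'g set \<Rightarrow> 'g set set \<Rightarrow> ('g set \<Rightarrow> real) \<Rightarrow> bool" where
  "uncertain_measure \<Gamma> L M \<longleftrightarrow>
     M \<Gamma> = 1 \<and>
     (\<forall>A\<in>L. M A + M (\<Gamma> - A) = 1) \<and>
     (\<forall>A :: nat \<Rightarrow> 'g set. (\<forall>i. A i \<in> L) \<longrightarrow> summable (\<lambda>i. M (A i)) \<longrightarrow>
         M (\<Union>i. A i) \<le> (\<Sum>i. M (A i)))"

definition uncertainty_space :: "'g set \<Rightarrow> 'g set set \<Rightarrow> ('g set \<Rightarrow> real) \<Rightarrow> bool" where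
  "uncertainty_space \<Gamma> L M \<longleftrightarrow> \<Gamma> \<noteq> {} \<and> sigma_algebra \<Gamma> L \<and> uncertain_measure \<Gamma> L M"

definition uncertain_variable :: "'g set \<Rightarrow> 'g set set \<Rightarrow> ('g \<Rightarrow> real) \<Rightarrow> bool" where
  "uncertain_variable \<Gamma> L \<xi> \<longleftrightarrow> (\<forall>B\<in>sets borel. {\<gamma>\<in>\<Gamma>. \<xi> \<gamma> \<in> B} \<in> L)"

definition unc_dist :: "'g set \<Rightarrow> ('g set \<Rightarrow> real) \<Rightarrow> ('g \<Rightarrow> real) \<Rightarrow> real \<Rightarrow> real" where
  "unc_dist \<Gamma> M \<xi> x = M {\<gamma>\<in>\<Gamma>. \<xi> \<gamma> \<le> x}"

text \<open>Normal uncertain variable N(e, sigma), sigma > 0 (expected value e, variance sigma^2).\<close>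
definition normal_uncertain :: "'g set \<Rightarrow> 'g set set \<Rightarrow> ('g set \<Rightarrow> real) \<Rightarrow> ('g \<Rightarrow> real) \<Rightarrow> real \<Rightarrow> real \<Rightarrow> bool" where
  "normal_uncertain \<Gamma> L M \<xi> e \<sigma> \<longleftrightarrow> uncertain_variable \<Gamma> L \<xi> \<and>
     (\<forall>x. unc_dist \<Gamma> M \<xi> x = inverse (1 + exp (pi * (e - x) / (sqrt 3 * \<sigma>))))"

definition unc_indep :: "'g set \<Rightarrow> ('g set \<Rightarrow> real) \<Rightarrow> nat \<Rightarrow> (nat \<Rightarrow> 'g \<Rightarrow> real) \<Rightarrow> bool" where
  "unc_indep \<Gamma> M k \<xi> \<longleftrightarrow>
     (\<forall>B :: nat \<Rightarrow> real set. (\<forall>i\<le>k. B i \<in> sets borel) \<longrightarrow>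
        M {\<gamma>\<in>\<Gamma>. \<forall>i\<le>k. \<xi> i \<gamma> \<in> B i} = Min ((\<lambda>i. M {\<gamma>\<in>\<Gamma>. \<xi> i \<gamma> \<in> B i}) ` {..k}))"

definition liu_process :: "'g set \<Rightarrow> 'g set set \<Rightarrow> ('g set \<Rightarrow> real) \<Rightarrow> (real \<Rightarrow> 'g \<Rightarrow> real) \<Rightarrow> bool" where
  "liu_process \<Gamma> L M C \<longleftrightarrow>
     (\<forall>t\<ge>0. uncertain_variable \<Gamma> L (C t)) \<and>
     (\<forall>\<gamma>\<in>\<Gamma>. C 0 \<gamma> = 0) \<and>
     (\<exists>A\<in>L. M A = 1 \<and> (\<forall>\<gamma>\<in>A. \<exists>K. \<forall>s\<ge>0. \<forall>t\<ge>0. \<bar>C s \<gamma> - C t \<gamma>\<bar> \<le> K * \<bar>s - t\<bar>)) \<and>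
     (\<forall>t>0. \<forall>s1\<ge>0. \<forall>s2\<ge>0. \<forall>x.
        unc_dist \<Gamma> M (\<lambda>\<gamma>. C (s1 + t) \<gamma> - C s1 \<gamma>) x = unc_dist \<Gamma> M (\<lambda>\<gamma>. C (s2 + t) \<gamma> - C s2 \<gamma>) x) \<and>
     (\<forall>(\<tau>::nat \<Rightarrow> real) k. 0 \<le> \<tau> 0 \<and> (\<forall>i<k. \<tau> i < \<tau> (Suc i)) \<longrightarrow>
        unc_indep \<Gamma> M k (\<lambda>i \<gamma>. if i = 0 then C (\<tau> 0) \<gamma> else C (\<tau> i) \<gamma> - C (\<tau> (i - 1)) \<gamma>)) \<and>
     (\<forall>s\<ge>0. \<forall>t>0. normal_uncertain \<Gamma> L M (\<lambda>\<gamma>. C (s + t) \<gamma> - C s \<gamma>) 0 t)"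

definition is_partition :: "(nat \<Rightarrow> real) \<Rightarrow> nat \<Rightarrow> real \<Rightarrow> bool" where
  "is_partition p k a \<longleftrightarrow> p 0 = 0 \<and> p k = a \<and> (\<forall>i<k. p i < p (Suc i))"

definition liu_sum :: "(real \<Rightarrow> 'g \<Rightarrow> real) \<Rightarrow> (real \<Rightarrow> 'g \<Rightarrow> real) \<Rightarrow> (nat \<Rightarrow> real) \<Rightarrow> nat \<Rightarrow> 'g \<Rightarrow> real" where
  "liu_sum Z C p k \<gamma> = (\<Sum>i<k. Z (p i) \<gamma> * (C (p (Suc i)) \<gamma> - C (p i) \<gamma>))"

definition liu_conv :: "(real \<Rightarrow> 'g \<Rightarrow> real) \<Rightarrow> (real \<Rightarrow> 'g \<Rightarrow> real) \<Rightarrow> real \<Rightarrow> 'g \<Rightarrow> real \<Rightarrow> bool" where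
  "liu_conv Z C a \<gamma> I \<longleftrightarrow>
     (\<forall>\<epsilon>>0. \<exists>\<delta>>0. \<forall>p k. is_partition p k a \<and> (\<forall>i<k. p (Suc i) - p i < \<delta>) \<longrightarrow>
        \<bar>liu_sum Z C p k \<gamma> - I\<bar> < \<epsilon>)"

definition liu_integrable :: "'g set set \<Rightarrow> ('g set \<Rightarrow> real) \<Rightarrow> (real \<Rightarrow> 'g \<Rightarrow> real) \<Rightarrow> (real \<Rightarrow> 'g \<Rightarrow> real) \<Rightarrow> real \<Rightarrow> bool" where
  "liu_integrable L M Z C a \<longleftrightarrow> (\<exists>A\<in>L. M A = 1 \<and> (\<forall>\<gamma>\<in>A. \<exists>I. liu_conv Z C a \<gamma> I))"

definition liu_int :: "(real \<Rightarrow> 'g \<Rightarrow> real) \<Rightarrow> (real \<Rightarrow> 'g \<Rightarrow> real) \<Rightarrow> real \<Rightarrow> 'g \<Rightarrow> real" where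
  "liu_int Z C a \<gamma> = (THE I. liu_conv Z C a \<gamma> I)"

text \<open>Continuity of f : [0,oo) x R^n -> R, with x in R^n represented by
  (x 0, ..., x (n-1)) of a function nat => real (this forces independence of x i for i >= n).\<close>
definition cont_Rn :: "nat \<Rightarrow> (real \<Rightarrow> (nat \<Rightarrow> real) \<Rightarrow> real) \<Rightarrow> bool" where
  "cont_Rn n f \<longleftrightarrow>
     (\<forall>t\<ge>0. \<forall>x. \<forall>\<epsilon>>0. \<exists>\<delta>>0. \<forall>t'\<ge>0. \<forall>x'.
        \<bar>t' - t\<bar> < \<delta> \<and> (\<forall>i<n. \<bar>x' i - x i\<bar> < \<delta>) \<longrightarrow> \<bar>f t' x' - f t x\<bar> < \<epsilon>)"

fun iter_int :: "nat \<Rightarrow> (real \<Rightarrow> real) \<Rightarrow> real \<Rightarrow> real" where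
  "iter_int 0 h t = h t"
| "iter_int (Suc m) h t = integral {0..t} (\<lambda>s. iter_int m h s)"

text \<open>X (with derivatives D 0 = X, D 1, ..., D (n-1)) solves the n-th order uncertain
  differential equation with initial values x0 0, ..., x0 (n-1): X is an uncertain process,
  the derivatives exist (one-sided at 0), the initial conditions hold, the inner Liu integrals
  exist (almost surely), and for every t >= 0 the integral equation holds almost surely, on
  sample points where all integrals in it exist.\<close>
definition is_solution ::
  "'g set \<Rightarrow> 'g set set \<Rightarrow> ('g set \<Rightarrow> real) \<Rightarrow> (real \<Rightarrow> 'g \<Rightarrow> real) \<Rightarrow> nat \<Rightarrow>
   (real \<Rightarrow> (nat \<Rightarrow> real) \<Rightarrow> real) \<Rightarrow> (real \<Rightarrow> (nat \<Rightarrow> real) \<Rightarrow> real) \<Rightarrow>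
   (nat \<Rightarrow> real) \<Rightarrow> (nat \<Rightarrow> real \<Rightarrow> 'g \<Rightarrow> real) \<Rightarrow> bool" where
  "is_solution \<Gamma> L M C n f g x0 D \<longleftrightarrow>
     (\<forall>t\<ge>0. uncertain_variable \<Gamma> L (D 0 t)) \<and>
     (\<forall>k. Suc k < n \<longrightarrow> (\<forall>\<gamma>\<in>\<Gamma>. \<forall>t\<ge>0.
         ((\<lambda>s. D k s \<gamma>) has_real_derivative D (Suc k) t \<gamma>) (at t within {0..}))) \<and>
     (\<forall>k<n. \<forall>\<gamma>\<in>\<Gamma>. D k 0 \<gamma> = x0 k) \<and>
     (\<forall>a\<ge>0. liu_integrable L M (\<lambda>s \<gamma>. g s (\<lambda>i. D i s \<gamma>)) C a) \<and>
     (\<forall>t\<ge>0. \<exists>A\<in>L. M A = 1 \<and> (\<forall>\<gamma>\<in>A.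
        (\<forall>a\<in>{0..t}. \<exists>I. liu_conv (\<lambda>s \<gamma>. g s (\<lambda>i. D i s \<gamma>)) C a \<gamma> I) \<and>
        (\<forall>m<n. \<forall>a\<in>{0..t}. (\<lambda>u. iter_int m (\<lambda>s. f s (\<lambda>i. D i s \<gamma>)) u) integrable_on {0..a}) \<and>
        (\<forall>m. Suc m < n \<longrightarrow> (\<forall>a\<in>{0..t}.
            (\<lambda>u. iter_int m (\<lambda>s. liu_int (\<lambda>s \<gamma>. g s (\<lambda>i. D i s \<gamma>)) C s \<gamma>) u) integrable_on {0..a})) \<and>
        D 0 t \<gamma> = (\<Sum>i<n. t ^ i / fact i * x0 i)
                   + iter_int n (\<lambda>s. f s (\<lambda>i. D i s \<gamma>)) t
                   + iter_int (n - 1) (\<lambda>s. liu_int (\<lambda>s \<gamma>. g s (\<lambda>i. D i s \<gamma>)) C s \<gamma>) t))"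

end

theory Submission
  imports Defs
begin


definition lsum :: "(real \<Rightarrow> real) \<Rightarrow> (real \<Rightarrow> real) \<Rightarrow> (nat \<Rightarrow> real) \<Rightarrow> nat \<Rightarrow> real" where
  "lsum z c p k = (\<Sum>i<k. z (p i) * (c (p (Suc i)) - c (p i)))"

definition conv1 :: "(real \<Rightarrow> real) \<Rightarrow> (real \<Rightarrow> real) \<Rightarrow> real \<Rightarrow> real \<Rightarrow> bool" where
  "conv1 z c a I \<longleftrightarrow> (\<forall>\<epsilon>>0. \<exists>\<delta>>0. \<forall>p k. is_partition p k a \<and> (\<forall>i<k. p (Suc i) - p i < \<delta>) \<longrightarrow>
        \<bar>lsum z c p k - I\<bar> < \<epsilon>)"

lemma liu_conv_conv1: "liu_conv Z C a \<gamma> I = conv1 (\<lambda>s. Z s \<gamma>) (\<lambda>s. C s \<gamma>) a I"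
  unfolding liu_conv_def conv1_def liu_sum_def lsum_def by simp

lemma partition_mono:
  assumes "is_partition p k a" "i \<le> j" "j \<le> k" shows "p i \<le> p j"
  using assms(2,3)
proof (induction j)
  case 0 then show ?case by simp
next
  case (Suc j)
  show ?case
  proof (cases "i = Suc j")
    case False
    then have "p i \<le> p j" using Suc by auto
    also have "p j < p (Suc j)" using assms(1) Suc.prems unfolding is_partition_def by auto
    finally show ?thesis by simp
  qed simp
qed

lemma partition_range:
  assumes "is_partition p k a" "i \<le> k" shows "0 \<le> p i" "p i \<le> a"
  using partition_mono[OF assms(1), of 0 i] partition_mono[OF assms(1), of i k] assms
  unfolding is_partition_def by auto

lemma fine_partition_exists:
  assumes "0 \<le> a" "0 < \<delta>"
  shows "\<exists>p k. is_partition p k a \<and> (\<forall>i<k. p (Suc i) - p i < \<delta>)"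
proof (cases "a = 0")
  case True
  then show ?thesis by (intro exI[of _ "\<lambda>_. 0"] exI[of _ 0]) (simp add: is_partition_def)
next
  case False
  then have a: "a > 0" using assms by simp
  obtain N :: nat where N: "a / \<delta> < real N" using reals_Archimedean2 by blast
  have Npos: "real N > 0" using N a assms(2) by (smt (verit) divide_pos_pos)
  have step: "a * real (Suc i) / real N - a * real i / real N = a / real N" for i
    by (simp add: field_simps add_divide_distrib)
  have small: "a / real N < \<delta>" using N Npos assms(2) by (simp add: field_simps)
  show ?thesis
  proof (intro exI[of _ "\<lambda>i. a * real i / real N"] exI[of _ N] conjI)
    show "is_partition (\<lambda>i. a * real i / real N) N a"
      unfolding is_partition_def using Npos a step
      by (auto simp: field_simps)
    show "\<forall>i<N. a * real (Suc i) / real N - a * real i / real N < \<delta>"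
      using step small by simp
  qed
qed

lemma conv1_unique:
  assumes "0 \<le> a" "conv1 z c a I" "conv1 z c a J" shows "I = J"
proof (rule ccontr)
  assume ne: "I \<noteq> J"
  define e where "e = \<bar>I - J\<bar> / 2"
  have e: "e > 0" using ne by (simp add: e_def)
  obtain d1 where d1: "d1 > 0" "\<forall>p k. is_partition p k a \<and> (\<forall>i<k. p (Suc i) - p i < d1) \<longrightarrow> \<bar>lsum z c p k - I\<bar> < e"
    using assms(2) e unfolding conv1_def by blast
  obtain d2 where d2: "d2 > 0" "\<forall>p k. is_partition p k a \<and> (\<forall>i<k. p (Suc i) - p i < d2) \<longrightarrow> \<bar>lsum z c p k - J\<bar> < e"
    using assms(3) e unfolding conv1_def by blast
  obtain p k where pk: "is_partition p k a" "\<forall>i<k. p (Suc i) - p i < min d1 d2"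
    using fine_partition_exists[OF assms(1), of "min d1 d2"] d1 d2 by auto
  have "\<bar>lsum z c p k - I\<bar> < e" "\<bar>lsum z c p k - J\<bar> < e" using d1 d2 pk by auto
  then show False unfolding e_def by (simp add: abs_if split: if_splits)
qed

lemma sum_split_add: "(\<Sum>i<m + N. f i) = (\<Sum>i<m. f i) + (\<Sum>j<N. (f::nat\<Rightarrow>real) (m + j))"
  by (induction N) auto


lemma concat_partition:
  assumes q: "is_partition q m u" "\<forall>i<m. q (Suc i) - q i < \<delta>"
    and r: "is_partition r N (t - u)" "\<forall>i<N. r (Suc i) - r i < \<delta>"
  defines "P \<equiv> (\<lambda>i. if i \<le> m then q i else u + r (i - m))"
  shows "is_partition P (m + N) t" "\<forall>i<m+N. P (Suc i) - P i < \<delta>"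
    "lsum z c P (m + N) = lsum z c q m + (\<Sum>j<N. z (u + r j) * (c (u + r (Suc j)) - c (u + r j)))"
proof -
  have q0: "q 0 = 0" "q m = u" using q unfolding is_partition_def by auto
  have r0: "r 0 = 0" "r N = t - u" using r unfolding is_partition_def by auto
  have Pj: "P (m + j) = u + r j" for j
    using q0 r0 by (cases j) (auto simp: P_def)
  have Pi: "i \<le> m \<Longrightarrow> P i = q i" for i by (simp add: P_def)
  show "is_partition P (m + N) t"
    unfolding is_partition_def
  proof (intro conjI allI impI)
    show "P 0 = 0" using q0 by (simp add: P_def)
    show "P (m + N) = t" using Pj[of N] r0 by simp
    fix i assume i: "i < m + N"
    show "P i < P (Suc i)"
    proof (cases "Suc i \<le> m")
      case True then show ?thesis using q i Pi[of i] Pi[of "Suc i"] unfolding is_partition_def by auto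
    next
      case False
      then obtain j where j: "i = m + j" "j < N" using i by (metis add_diff_inverse_nat Suc_leI add_less_cancel_left not_less_eq_eq le_add_diff_inverse2)
      then have "Suc i = m + Suc j" by simp
      then show ?thesis using Pj[of j] Pj[of "Suc j"] r j unfolding is_partition_def by auto
    qed
  qed
  show "\<forall>i<m+N. P (Suc i) - P i < \<delta>"
  proof (intro allI impI)
    fix i assume i: "i < m + N"
    show "P (Suc i) - P i < \<delta>"
    proof (cases "Suc i \<le> m")
      case True then show ?thesis using q i Pi[of i] Pi[of "Suc i"] by auto
    next
      case False
      then obtain j where j: "i = m + j" "j < N" using i by (metis add_diff_inverse_nat Suc_leI add_less_cancel_left not_less_eq_eq le_add_diff_inverse2)
      then have "Suc i = m + Suc j" by simp
      then show ?thesis using Pj[of j] Pj[of "Suc j"] r j by auto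
    qed
  qed
  show "lsum z c P (m + N) = lsum z c q m + (\<Sum>j<N. z (u + r j) * (c (u + r (Suc j)) - c (u + r j)))"
    unfolding lsum_def sum_split_add
  proof (intro arg_cong2[where f="(+)"])
    show "(\<Sum>i<m. z (P i) * (c (P (Suc i)) - c (P i))) = (\<Sum>i<m. z (q i) * (c (q (Suc i)) - c (q i)))"
      by (intro sum.cong) (auto simp: P_def)
    show "(\<Sum>j<N. z (P (m + j)) * (c (P (Suc (m + j))) - c (P (m + j)))) =
      (\<Sum>j<N. z (u + r j) * (c (u + r (Suc j)) - c (u + r j)))"
      using Pj[of "Suc _"] by (intro sum.cong) (auto simp: Pj)
  qed
qed

lemma unif_conv:
  assumes t: "0 \<le> t" and conv: "\<forall>a\<in>{0..t}. conv1 z c a (F a)" and e: "e > 0"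
  shows "\<exists>\<delta>>0. \<forall>u p m. u \<in> {0..t} \<and> is_partition p m u \<and> (\<forall>i<m. p (Suc i) - p i < \<delta>) \<longrightarrow>
            \<bar>lsum z c p m - F u\<bar> < e"
proof -
  have e3: "e/3 > 0" using e by simp
  obtain \<delta> where \<delta>: "\<delta> > 0" "\<forall>p k. is_partition p k t \<and> (\<forall>i<k. p (Suc i) - p i < \<delta>) \<longrightarrow> \<bar>lsum z c p k - F t\<bar> < e/3"
    using conv t e3 unfolding conv1_def by (meson atLeastAtMost_iff order_refl)
  show ?thesis
  proof (intro exI[of _ \<delta>] conjI allI impI)
    show "\<delta> > 0" by fact
    fix u p m assume H: "u \<in> {0..t} \<and> is_partition p m u \<and> (\<forall>i<m. p (Suc i) - p i < \<delta>)"
    obtain r N where r: "is_partition r N (t - u)" "\<forall>i<N. r (Suc i) - r i < \<delta>"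
      using fine_partition_exists[of "t-u" \<delta>] H \<delta> by auto
    define T where "T = (\<Sum>j<N. z (u + r j) * (c (u + r (Suc j)) - c (u + r j)))"
    have key: "\<bar>lsum z c q m' + T - F t\<bar> < e/3"
      if "is_partition q m' u" "\<forall>i<m'. q (Suc i) - q i < \<delta>" for q m'
    proof -
      note cp = concat_partition(1,2)[OF that r] concat_partition(3)[OF that r, of z c]
      have "\<bar>lsum z c (\<lambda>i. if i \<le> m' then q i else u + r (i - m')) (m' + N) - F t\<bar> < e/3"
        using \<delta>(2) cp(1,2) by blast
      then show ?thesis using cp(3) unfolding T_def by simp
    qed
    obtain \<delta>' where \<delta>': "\<delta>' > 0" "\<forall>p k. is_partition p k u \<and> (\<forall>i<k. p (Suc i) - p i < \<delta>') \<longrightarrow> \<bar>lsum z c p k - F u\<bar> < e/3"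
      using conv H e3 unfolding conv1_def by meson
    obtain q k where qk: "is_partition q k u" "\<forall>i<k. q (Suc i) - q i < min \<delta> \<delta>'"
      using fine_partition_exists[of u "min \<delta> \<delta>'"] H \<delta> \<delta>' by auto
    have "\<bar>lsum z c q k - F u\<bar> < e/3" using \<delta>'(2) qk by auto
    moreover have "\<bar>lsum z c q k + T - F t\<bar> < e/3" using key[OF qk(1)] qk(2) by auto
    moreover have "\<bar>lsum z c p m + T - F t\<bar> < e/3" using key H by auto
    ultimately show "\<bar>lsum z c p m - F u\<bar> < e" by (simp add: abs_if split: if_splits)
  qed
qed


lemma incr_liu:
  assumes e: "e > 0" and \<delta>: "\<delta> > 0"
    and h\<delta>: "\<forall>u p m. u \<in> {0..t} \<and> is_partition p m u \<and> (\<forall>i<m. p (Suc i) - p i < \<delta>) \<longrightarrow>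
            \<bar>lsum z c p m - F u\<bar> < e"
    and uv: "0 \<le> u" "u \<le> v" "v \<le> t" "v - u < \<delta>"
  shows "\<bar>F v - F u - z u * (c v - c u)\<bar> < 2 * e"
proof (cases "u = v")
  case True then show ?thesis using e by simp
next
  case False
  then have uv': "u < v" using uv by simp
  obtain q k where q: "is_partition q k u" "\<forall>i<k. q (Suc i) - q i < \<delta>"
    using fine_partition_exists[of u \<delta>] uv \<delta> by auto
  define r where "r = (\<lambda>i::nat. real i * (v - u))"
  have r: "is_partition r 1 (v - u)" "\<forall>i<1. r (Suc i) - r i < \<delta>"
    using uv uv' unfolding r_def is_partition_def by auto
  note cp = concat_partition(1,2)[OF q r] concat_partition(3)[OF q r, of z c]
  have "\<bar>lsum z c (\<lambda>i. if i \<le> k then q i else u + r (i - k)) (k + 1) - F v\<bar> < e"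
    using h\<delta> cp(1,2) uv by auto
  moreover have "\<bar>lsum z c q k - F u\<bar> < e" using h\<delta> q uv by auto
  moreover have "u + r 1 = v" "u + r 0 = u" by (auto simp: r_def)
  ultimately show ?thesis using cp(3) by (simp add: abs_if split: if_splits)
qed

lemma F_cont:
  assumes t: "0 \<le> t" and conv: "\<forall>a\<in>{0..t}. conv1 z c a (F a)" and cc: "continuous_on {0..t} c"
  shows "continuous_on {0..t} F"
  unfolding continuous_on_iff
proof (intro ballI allI impI)
  fix x \<epsilon> :: real assume x: "x \<in> {0..t}" and \<epsilon>: "\<epsilon> > 0"
  define e where "e = \<epsilon> / 8"
  have e: "e > 0" using \<epsilon> by (simp add: e_def)
  obtain \<delta> where \<delta>: "\<delta> > 0" and h\<delta>: "\<forall>u p m. u \<in> {0..t} \<and> is_partition p m u \<and> (\<forall>i<m. p (Suc i) - p i < \<delta>) \<longrightarrow>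
            \<bar>lsum z c p m - F u\<bar> < e"
    using unif_conv[OF t conv e] by blast
  define u0 where "u0 = max 0 (x - \<delta>/2)"
  define K where "K = 1 + \<bar>z x\<bar> + \<bar>z u0\<bar>"
  have K: "K > 0" "\<bar>z x\<bar> \<le> K" "\<bar>z u0\<bar> \<le> K" by (auto simp: K_def)
  have "\<epsilon> / (2 * K) > 0" using K \<epsilon> by simp
  then obtain d1 where d1: "d1 > 0" "\<forall>y\<in>{0..t}. dist y x < d1 \<longrightarrow> dist (c y) (c x) < \<epsilon> / (2 * K)"
    using cc x unfolding continuous_on_iff by blast
  have prod: "\<bar>w * (c a - c b)\<bar> < \<epsilon> / 2" if "\<bar>w\<bar> \<le> K" "\<bar>c a - c b\<bar> < \<epsilon> / (2 * K)" for w a b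
  proof -
    have "\<bar>w * (c a - c b)\<bar> \<le> K * \<bar>c a - c b\<bar>" unfolding abs_mult using that
      by (intro mult_right_mono) auto
    also have "\<dots> < K * (\<epsilon> / (2 * K))" using that K by (intro mult_strict_left_mono) auto
    also have "\<dots> = \<epsilon> / 2" using K by simp
    finally show ?thesis .
  qed
  show "\<exists>d>0. \<forall>y\<in>{0..t}. dist y x < d \<longrightarrow> dist (F y) (F x) < \<epsilon>"
  proof (intro exI[of _ "min d1 (\<delta>/2)"] conjI ballI impI)
    show "min d1 (\<delta>/2) > 0" using d1 \<delta> by simp
    fix y assume y: "y \<in> {0..t}" and dy: "dist y x < min d1 (\<delta>/2)"
    have cyx: "\<bar>c y - c x\<bar> < \<epsilon> / (2 * K)" "\<bar>c x - c y\<bar> < \<epsilon> / (2 * K)"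
      using d1(2) y dy by (auto simp: dist_real_def abs_minus_commute)
    show "dist (F y) (F x) < \<epsilon>"
    proof (cases "x \<le> y")
      case True
      have "\<bar>F y - F x - z x * (c y - c x)\<bar> < 2 * e"
        using incr_liu[OF e \<delta> h\<delta>, of x y] x y True dy by (auto simp: dist_real_def)
      moreover have "\<bar>z x * (c y - c x)\<bar> < \<epsilon> / 2" using prod K cyx by blast
      ultimately show ?thesis unfolding dist_real_def e_def by (simp add: abs_if split: if_splits)
    next
      case False
      have u0y: "u0 \<le> y" "0 \<le> u0" "x - u0 < \<delta>" using False dy y \<delta> by (auto simp: u0_def dist_real_def)
      have "\<bar>F x - F u0 - z u0 * (c x - c u0)\<bar> < 2 * e"
        using incr_liu[OF e \<delta> h\<delta>, of u0 x] x u0y False by auto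
      moreover have "\<bar>F y - F u0 - z u0 * (c y - c u0)\<bar> < 2 * e"
        using incr_liu[OF e \<delta> h\<delta>, of u0 y] x y u0y False by auto
      moreover have "\<bar>z u0 * (c x - c y)\<bar> < \<epsilon> / 2" using prod K cyx by blast
      ultimately show ?thesis unfolding dist_real_def e_def
        by (simp add: abs_if algebra_simps split: if_splits)
    qed
  qed
qed


lemma cont_bound:
  fixes f :: "real \<Rightarrow> real"
  assumes "continuous_on {a..b} f"
  obtains B where "B > 0" "\<forall>s\<in>{a..b}. \<bar>f s\<bar> \<le> B"
proof -
  have "bounded (f ` {a..b})"
    by (rule compact_imp_bounded[OF compact_continuous_image[OF assms compact_Icc]])
  then obtain B where "B > 0" "\<forall>x\<in>f ` {a..b}. norm x \<le> B" unfolding bounded_pos by blast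
  then show ?thesis using that by auto
qed

lemma incr_bound:
  fixes \<phi> \<phi>' G F :: "real \<Rightarrow> real"
  assumes ab: "a \<le> b" "{a..b} \<subseteq> S"
    and dphi: "\<forall>s\<in>S. (\<phi> has_real_derivative \<phi>' s) (at s within S)"
    and dG: "\<forall>s\<in>S. (G has_real_derivative \<phi>' s * F s) (at s within S)"
    and B: "\<forall>s\<in>S. \<bar>\<phi>' s\<bar> \<le> B"
    and w: "\<forall>s\<in>{a..b}. \<bar>K - F s\<bar> \<le> w"
  shows "\<bar>(\<phi> b - \<phi> a) * K - (G b - G a)\<bar> \<le> B * w * (b - a)"
proof -
  have "norm ((\<lambda>s. \<phi> s * K - G s) b - (\<lambda>s. \<phi> s * K - G s) a) \<le> (B * w) * norm (b - a)"
  proof (rule field_differentiable_bound[where S="{a..b}" and f'="\<lambda>s. \<phi>' s * K - \<phi>' s * F s"])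
    show "convex {a..b}" by simp
    show "a \<in> {a..b}" "b \<in> {a..b}" using ab by auto
    fix s assume s: "s \<in> {a..b}"
    have "((\<lambda>s. \<phi> s * K - G s) has_real_derivative \<phi>' s * K - \<phi>' s * F s) (at s within S)"
      using dphi dG s ab by (auto intro!: derivative_eq_intros)
    then show "((\<lambda>s. \<phi> s * K - G s) has_real_derivative \<phi>' s * K - \<phi>' s * F s) (at s within {a..b})"
      using ab(2) by (rule DERIV_subset)
    have sS: "s \<in> S" using s ab by auto
    have B0: "0 \<le> B" using B sS abs_ge_zero order_trans by blast
    have "norm (\<phi>' s * K - \<phi>' s * F s) = \<bar>\<phi>' s\<bar> * \<bar>K - F s\<bar>"
      by (simp add: abs_mult right_diff_distrib[symmetric])
    also have "\<dots> \<le> B * w" using B w s sS B0 by (intro mult_mono) auto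
    finally show "norm (\<phi>' s * K - \<phi>' s * F s) \<le> B * w" .
  qed
  then show ?thesis using ab by (simp add: algebra_simps)
qed

lemma lsum_Suc: "lsum z c p (Suc k) = lsum z c p k + z (p k) * (c (p (Suc k)) - c (p k))"
  by (simp add: lsum_def)

lemma abel:
  "lsum (\<lambda>s. \<phi> s * z s) c p k = \<phi> (p k) * lsum z c p k
      - (\<Sum>j<k. (\<phi> (p (Suc j)) - \<phi> (p j)) * lsum z c p (Suc j))"
proof (induction k)
  case 0 then show ?case by (simp add: lsum_def)
next
  case (Suc k)
  show ?case unfolding lsum_Suc[of "\<lambda>s. \<phi> s * z s"] Suc sum.lessThan_Suc lsum_Suc[of z]
    by (simp add: algebra_simps)
qed

lemma liu_main:
  fixes \<phi> \<phi>' z c F :: "real \<Rightarrow> real"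
  assumes t: "0 \<le> t" and conv: "\<forall>a\<in>{0..t}. conv1 z c a (F a)" and cc: "continuous_on {0..t} c"
    and dphi: "\<forall>s\<in>{0..t}. (\<phi> has_real_derivative \<phi>' s) (at s within {0..t})"
    and cphi: "continuous_on {0..t} \<phi>'"
  shows "conv1 (\<lambda>s. \<phi> s * z s) c t (\<phi> t * F t - integral {0..t} (\<lambda>s. \<phi>' s * F s))"
  unfolding conv1_def
proof (intro allI impI)
  fix \<epsilon> :: real assume \<epsilon>: "\<epsilon> > 0"
  have Fc: "continuous_on {0..t} F" by (rule F_cont[OF t conv cc])
  define G where "G x = integral {0..x} (\<lambda>s. \<phi>' s * F s)" for x
  have dG: "\<forall>s\<in>{0..t}. (G has_real_derivative \<phi>' s * F s) (at s within {0..t})"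
    unfolding G_def using cphi Fc by (auto intro!: integral_has_real_derivative continuous_on_mult)
  obtain B where B: "B > 0" "\<forall>s\<in>{0..t}. \<bar>\<phi>' s\<bar> \<le> B" using cont_bound[OF cphi] by blast
  have uc: "uniformly_continuous_on {0..t} F" by (rule compact_uniformly_continuous[OF Fc compact_Icc])
  define \<eta> where "\<eta> = \<epsilon> / (2 * (1 + \<bar>\<phi> t\<bar> + B * t))"
  have Bt: "B * t \<ge> 0" using B t by simp
  have \<eta>: "\<eta> > 0" unfolding \<eta>_def using \<epsilon> Bt by (intro divide_pos_pos) auto
  obtain \<delta>1 where \<delta>1: "\<delta>1 > 0" "\<forall>u p m. u \<in> {0..t} \<and> is_partition p m u \<and> (\<forall>i<m. p (Suc i) - p i < \<delta>1) \<longrightarrow>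
            \<bar>lsum z c p m - F u\<bar> < \<eta>"
    using unif_conv[OF t conv \<eta>] by blast
  obtain \<delta>2 where \<delta>2: "\<delta>2 > 0" "\<forall>x\<in>{0..t}. \<forall>x'\<in>{0..t}. dist x' x < \<delta>2 \<longrightarrow> dist (F x') (F x) < \<eta>"
    using uc \<eta> unfolding uniformly_continuous_on_def by blast
  show "\<exists>\<delta>>0. \<forall>p k. is_partition p k t \<and> (\<forall>i<k. p (Suc i) - p i < \<delta>) \<longrightarrow>
        \<bar>lsum (\<lambda>s. \<phi> s * z s) c p k - (\<phi> t * F t - integral {0..t} (\<lambda>s. \<phi>' s * F s))\<bar> < \<epsilon>"
  proof (intro exI[of _ "min \<delta>1 \<delta>2"] conjI allI impI)
    show "min \<delta>1 \<delta>2 > 0" using \<delta>1 \<delta>2 by simp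
    fix p k assume pk: "is_partition p k t \<and> (\<forall>i<k. p (Suc i) - p i < min \<delta>1 \<delta>2)"
    then have part: "is_partition p k t" and mesh: "\<forall>i<k. p (Suc i) - p i < min \<delta>1 \<delta>2" by auto
    have p0: "p 0 = 0" "p k = t" using part unfolding is_partition_def by auto
    have prange: "0 \<le> p i" "p i \<le> t" if "i \<le> k" for i using partition_range[OF part that] by auto
    have G0: "G 0 = 0" by (simp add: G_def)
    have Gt: "G t = (\<Sum>j<k. G (p (Suc j)) - G (p j))"
      using sum_lessThan_telescope[of "\<lambda>j. G (p j)" k] p0 G0 by simp
    have Sk: "\<bar>lsum z c p k - F t\<bar> < \<eta>" using \<delta>1(2) part mesh t by auto
    have termb: "\<bar>(\<phi> (p (Suc j)) - \<phi> (p j)) * lsum z c p (Suc j) - (G (p (Suc j)) - G (p j))\<bar>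
        \<le> B * (2 * \<eta>) * (p (Suc j) - p j)" if j: "j < k" for j
    proof (rule incr_bound[OF _ _ dphi dG B(2)])
      show "p j \<le> p (Suc j)" using part j unfolding is_partition_def by (auto intro: less_imp_le)
      show "{p j..p (Suc j)} \<subseteq> {0..t}" using prange[of j] prange[of "Suc j"] j by auto
      have partj: "is_partition p (Suc j) (p (Suc j))" using part j unfolding is_partition_def by auto
      have S1: "\<bar>lsum z c p (Suc j) - F (p (Suc j))\<bar> < \<eta>"
        using \<delta>1(2) partj mesh j prange[of "Suc j"] by auto
      show "\<forall>s\<in>{p j..p (Suc j)}. \<bar>lsum z c p (Suc j) - F s\<bar> \<le> 2 * \<eta>"
      proof
        fix s assume s: "s \<in> {p j..p (Suc j)}"
        have "dist s (p (Suc j)) < \<delta>2" using s mesh j by (auto simp: dist_real_def)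
        then have "dist (F s) (F (p (Suc j))) < \<eta>"
          using \<delta>2(2) s prange[of j] prange[of "Suc j"] j by auto
        then show "\<bar>lsum z c p (Suc j) - F s\<bar> \<le> 2 * \<eta>" using S1
          by (simp add: dist_real_def abs_if split: if_splits)
      qed
    qed
    have sumb: "\<bar>\<Sum>j<k. (\<phi> (p (Suc j)) - \<phi> (p j)) * lsum z c p (Suc j) - (G (p (Suc j)) - G (p j))\<bar>
        \<le> B * (2 * \<eta>) * t"
    proof -
      have "\<bar>\<Sum>j<k. (\<phi> (p (Suc j)) - \<phi> (p j)) * lsum z c p (Suc j) - (G (p (Suc j)) - G (p j))\<bar>
          \<le> (\<Sum>j<k. \<bar>(\<phi> (p (Suc j)) - \<phi> (p j)) * lsum z c p (Suc j) - (G (p (Suc j)) - G (p j))\<bar>)"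
        by (rule sum_abs)
      also have "\<dots> \<le> (\<Sum>j<k. B * (2 * \<eta>) * (p (Suc j) - p j))"
        using termb by (intro sum_mono) auto
      also have "\<dots> = B * (2 * \<eta>) * t"
        by (simp add: sum_distrib_left[symmetric] sum_lessThan_telescope p0)
      finally show ?thesis .
    qed
    have eq: "lsum (\<lambda>s. \<phi> s * z s) c p k - (\<phi> t * F t - integral {0..t} (\<lambda>s. \<phi>' s * F s))
       = \<phi> t * (lsum z c p k - F t)
         - (\<Sum>j<k. (\<phi> (p (Suc j)) - \<phi> (p j)) * lsum z c p (Suc j) - (G (p (Suc j)) - G (p j)))"
      unfolding abel p0(2) sum_subtractf G_def[symmetric, of t] Gt[unfolded sum_subtractf]
      by (simp add: algebra_simps)
    have a1: "\<bar>\<phi> t * (lsum z c p k - F t)\<bar> \<le> \<bar>\<phi> t\<bar> * \<eta>"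
      unfolding abs_mult using Sk by (intro mult_left_mono) auto
    have "\<bar>lsum (\<lambda>s. \<phi> s * z s) c p k - (\<phi> t * F t - integral {0..t} (\<lambda>s. \<phi>' s * F s))\<bar>
        \<le> \<bar>\<phi> t\<bar> * \<eta> + B * (2 * \<eta>) * t"
      unfolding eq using a1 sumb by (smt (verit))
    also have "\<dots> = (\<bar>\<phi> t\<bar> + 2 * (B * t)) * \<eta>" by (simp add: algebra_simps)
    also have "\<dots> < (2 * (1 + \<bar>\<phi> t\<bar> + B * t)) * \<eta>"
      using \<eta> Bt by (intro mult_strict_right_mono) auto
    also have "\<dots> = \<epsilon>" unfolding \<eta>_def using Bt by (simp add: field_simps)
    finally show "\<bar>lsum (\<lambda>s. \<phi> s * z s) c p k - (\<phi> t * F t - integral {0..t} (\<lambda>s. \<phi>' s * F s))\<bar> < \<epsilon>" .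
  qed
qed


lemma hk_parts:
  fixes h \<phi> \<phi>' :: "real \<Rightarrow> real"
  assumes t: "0 \<le> t" and hi: "h integrable_on {0..t}"
    and dphi: "\<forall>s\<in>{0..t}. (\<phi> has_real_derivative \<phi>' s) (at s within {0..t})"
    and cphi: "continuous_on {0..t} \<phi>'"
  shows "((\<lambda>s. \<phi> s * h s) has_integral
           (\<phi> t * integral {0..t} h - integral {0..t} (\<lambda>s. \<phi>' s * integral {0..s} h))) {0..t}"
proof -
  define H where "H x = integral {0..x} h" for x
  have Hc: "continuous_on {0..t} H" unfolding H_def by (rule indefinite_integral_continuous_1[OF hi])
  define G where "G x = integral {0..x} (\<lambda>s. \<phi>' s * H s)" for x
  have dG: "\<forall>s\<in>{0..t}. (G has_real_derivative \<phi>' s * H s) (at s within {0..t})"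
    unfolding G_def using cphi Hc by (auto intro!: integral_has_real_derivative continuous_on_mult)
  define \<Phi> where "\<Phi> x = \<phi> x * H x - G x" for x
  have phic: "continuous_on {0..t} \<phi>"
    using dphi by (auto simp: continuous_on_eq_continuous_within intro: DERIV_continuous)
  obtain P where P: "P > 0" "\<forall>s\<in>{0..t}. \<bar>\<phi> s\<bar> \<le> P" using cont_bound[OF phic] by blast
  obtain B where B: "B > 0" "\<forall>s\<in>{0..t}. \<bar>\<phi>' s\<bar> \<le> B" using cont_bound[OF cphi] by blast
  have uc: "uniformly_continuous_on {0..t} H" by (rule compact_uniformly_continuous[OF Hc compact_Icc])
  have Bt: "B * t \<ge> 0" using B t by simp
  have H0: "H 0 = 0" "G 0 = 0" by (auto simp: H_def G_def)
  have Y: "\<phi> t * integral {0..t} h - integral {0..t} (\<lambda>s. \<phi>' s * integral {0..s} h) = \<Phi> t - \<Phi> 0"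
    by (simp add: \<Phi>_def H0 H_def[symmetric] G_def[symmetric])
  have hi': "h integrable_on cbox 0 t" using hi by simp
  show ?thesis
    unfolding has_integral_real Y
  proof (intro allI impI)
    fix e :: real assume e: "e > 0"
    define e1 where "e1 = e / (2 * P)"
    have e1: "e1 > 0" using e P by (simp add: e1_def)
    define \<omega> where "\<omega> = e / (2 * (1 + B * t))"
    have \<omega>: "\<omega> > 0" using e Bt by (simp add: \<omega>_def)
    obtain \<gamma>1 where g1: "gauge \<gamma>1" and hen: "\<And>p. \<lbrakk>p tagged_partial_division_of (cbox 0 t); \<gamma>1 fine p\<rbrakk> \<Longrightarrow>
             sum (\<lambda>(x,k). norm(Henstock_Kurzweil_Integration.content k *\<^sub>R h x - integral k h)) p < e1"
      using Henstock_lemma[OF hi' e1] by blast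
    obtain \<delta> where \<delta>: "\<delta> > 0" "\<forall>x\<in>{0..t}. \<forall>x'\<in>{0..t}. dist x' x < \<delta> \<longrightarrow> dist (H x') (H x) < \<omega>"
      using uc \<omega> unfolding uniformly_continuous_on_def by blast
    show "\<exists>\<gamma>. gauge \<gamma> \<and> (\<forall>\<D>. \<D> tagged_division_of {0..t} \<and> \<gamma> fine \<D> \<longrightarrow>
             norm ((\<Sum>(x, k)\<in>\<D>. Henstock_Kurzweil_Integration.content k *\<^sub>R (\<phi> x * h x)) - (\<Phi> t - \<Phi> 0)) < e)"
    proof (intro exI[of _ "\<lambda>x. \<gamma>1 x \<inter> ball x (\<delta>/2)"] conjI allI impI)
      show "gauge (\<lambda>x. \<gamma>1 x \<inter> ball x (\<delta>/2))" using g1 \<delta> by (auto intro!: gauge_Int gauge_ball_dependent)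
      fix D assume DD: "D tagged_division_of {0..t} \<and> (\<lambda>x. \<gamma>1 x \<inter> ball x (\<delta>/2)) fine D"
      then have D: "D tagged_division_of {0..t}" and f1: "\<gamma>1 fine D" and f2: "(\<lambda>x. ball x (\<delta>/2)) fine D"
        unfolding fine_Int by auto
      have finD: "finite D" using D by blast
      have hsum: "(\<Sum>(x,K)\<in>D. norm (Henstock_Kurzweil_Integration.content K *\<^sub>R h x - integral K h)) < e1"
        using hen[OF _ f1] D unfolding tagged_division_of_def by simp
      have piece: "Henstock_Kurzweil_Integration.content K *\<^sub>R (\<phi> x * h x) = \<phi> x * (Henstock_Kurzweil_Integration.content K * h x - integral K h)
          + (\<phi> x * integral K h - (\<Phi> (Sup K) - \<Phi> (Inf K))) + (\<Phi> (Sup K) - \<Phi> (Inf K))" for x K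
        by (simp add: algebra_simps)
      have bound2: "\<bar>\<phi> x * integral K h - (\<Phi> (Sup K) - \<Phi> (Inf K))\<bar> \<le> B * \<omega> * (Sup K - Inf K)"
        if xK: "(x, K) \<in> D" for x K
      proof -
        obtain u v where K: "K = cbox u v" using D xK by blast
        have xin: "x \<in> K" and Ksub: "K \<subseteq> {0..t}" using D xK by blast+
        have uv: "u \<le> x" "x \<le> v" using xin K by auto
        have u0: "0 \<le> u" "v \<le> t" using Ksub K uv by auto
        have Kb: "K \<subseteq> ball x (\<delta>/2)" using f2 xK unfolding fine_def by blast
        have "u \<in> K" "v \<in> K" using K uv by auto
        then have "u \<in> ball x (\<delta>/2)" "v \<in> ball x (\<delta>/2)" using Kb by auto
        then have vu: "v - u < \<delta>" unfolding mem_ball dist_real_def by linarith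
        have KK: "K = {u..v}" "Sup K = v" "Inf K = u" using K uv by auto
        have intK: "integral K h = H v - H u"
          unfolding KK H_def using Henstock_Kurzweil_Integration.integral_combine[where a=0 and c=u and b=v and f=h] u0 uv integrable_on_subinterval[OF hi, of 0 v]
          by auto
        have b1: "\<bar>(\<phi> v - \<phi> x) * H v - (G v - G x)\<bar> \<le> B * \<omega> * (v - x)"
        proof (rule incr_bound[OF _ _ dphi dG B(2)])
          show "x \<le> v" "{x..v} \<subseteq> {0..t}" using uv u0 by auto
          show "\<forall>s\<in>{x..v}. \<bar>H v - H s\<bar> \<le> \<omega>"
          proof
            fix s assume s: "s \<in> {x..v}"
            have "dist s v < \<delta>" using s uv vu by (auto simp: dist_real_def)
            then have "dist (H s) (H v) < \<omega>" using \<delta>(2) s uv u0 by auto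
            then show "\<bar>H v - H s\<bar> \<le> \<omega>" by (simp add: dist_real_def abs_minus_commute)
          qed
        qed
        have b2: "\<bar>(\<phi> x - \<phi> u) * H u - (G x - G u)\<bar> \<le> B * \<omega> * (x - u)"
        proof (rule incr_bound[OF _ _ dphi dG B(2)])
          show "u \<le> x" "{u..x} \<subseteq> {0..t}" using uv u0 by auto
          show "\<forall>s\<in>{u..x}. \<bar>H u - H s\<bar> \<le> \<omega>"
          proof
            fix s assume s: "s \<in> {u..x}"
            have "dist s u < \<delta>" using s uv vu by (auto simp: dist_real_def)
            then have "dist (H s) (H u) < \<omega>" using \<delta>(2) s uv u0 by auto
            then show "\<bar>H u - H s\<bar> \<le> \<omega>" by (simp add: dist_real_def abs_minus_commute)
          qed
        qed
        have "\<phi> x * integral K h - (\<Phi> (Sup K) - \<Phi> (Inf K))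
           = - (((\<phi> v - \<phi> x) * H v - (G v - G x)) + ((\<phi> x - \<phi> u) * H u - (G x - G u)))"
          unfolding intK KK(2,3) \<Phi>_def by (simp add: algebra_simps)
        then have "\<bar>\<phi> x * integral K h - (\<Phi> (Sup K) - \<Phi> (Inf K))\<bar> \<le> B * \<omega> * (v - x) + B * \<omega> * (x - u)"
          using b1 b2 by (simp add: abs_if split: if_splits)
        also have "\<dots> = B * \<omega> * (Sup K - Inf K)" unfolding KK(2,3) by (simp add: algebra_simps)
        finally show ?thesis .
      qed
      have bound1: "\<bar>\<phi> x * (Henstock_Kurzweil_Integration.content K * h x - integral K h)\<bar> \<le> P * norm (Henstock_Kurzweil_Integration.content K *\<^sub>R h x - integral K h)"
        if xK: "(x, K) \<in> D" for x K
      proof -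
        have "x \<in> {0..t}" using D xK by blast
        then have "\<bar>\<phi> x\<bar> \<le> P" using P by auto
        then show ?thesis unfolding abs_mult real_norm_def real_scaleR_def by (intro mult_right_mono) auto
      qed
      have tel: "(\<Sum>(x,K)\<in>D. \<Phi> (Sup K) - \<Phi> (Inf K)) = \<Phi> t - \<Phi> 0"
        by (rule additive_tagged_division_1[OF t D])
      have telid: "(\<Sum>(x,K)\<in>D. Sup K - Inf K) = t"
        using additive_tagged_division_1[OF t D, of "\<lambda>x. x"] by simp
      have S1: "\<bar>\<Sum>(x,K)\<in>D. \<phi> x * (Henstock_Kurzweil_Integration.content K * h x - integral K h)\<bar> < e / 2"
      proof -
        have "\<bar>\<Sum>(x,K)\<in>D. \<phi> x * (Henstock_Kurzweil_Integration.content K * h x - integral K h)\<bar>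
             \<le> (\<Sum>(x,K)\<in>D. \<bar>\<phi> x * (Henstock_Kurzweil_Integration.content K * h x - integral K h)\<bar>)"
          by (rule order_trans[OF sum_abs]) (simp add: split_def)
        also have "\<dots> \<le> (\<Sum>(x,K)\<in>D. P * norm (Henstock_Kurzweil_Integration.content K *\<^sub>R h x - integral K h))"
          using bound1 by (intro sum_mono) (auto simp: split_def)
        also have "\<dots> = P * (\<Sum>(x,K)\<in>D. norm (Henstock_Kurzweil_Integration.content K *\<^sub>R h x - integral K h))"
          by (simp add: sum_distrib_left split_def)
        also have "\<dots> < P * e1" using hsum P by (intro mult_strict_left_mono) auto
        also have "\<dots> = e / 2" using P by (simp add: e1_def)
        finally show ?thesis .
      qed
      have S2: "\<bar>\<Sum>(x,K)\<in>D. \<phi> x * integral K h - (\<Phi> (Sup K) - \<Phi> (Inf K))\<bar> < e / 2"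
      proof -
        have "\<bar>\<Sum>(x,K)\<in>D. \<phi> x * integral K h - (\<Phi> (Sup K) - \<Phi> (Inf K))\<bar>
             \<le> (\<Sum>(x,K)\<in>D. \<bar>\<phi> x * integral K h - (\<Phi> (Sup K) - \<Phi> (Inf K))\<bar>)"
          by (rule order_trans[OF sum_abs]) (simp add: split_def)
        also have "\<dots> \<le> (\<Sum>(x,K)\<in>D. B * \<omega> * (Sup K - Inf K))"
          using bound2 by (intro sum_mono) (auto simp: split_def)
        also have "\<dots> = B * \<omega> * t"
          using telid by (simp add: sum_distrib_left[symmetric] split_def)
        also have "\<dots> < e / 2"
        proof -
          have "B * \<omega> * t = (e / 2) * (B * t / (1 + B * t))" unfolding \<omega>_def using Bt by (simp add: field_simps)
          also have "\<dots> < (e / 2) * 1" using e Bt by (intro mult_strict_left_mono) auto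
          finally show ?thesis by simp
        qed
        finally show ?thesis .
      qed
      have "(\<Sum>(x, k)\<in>D. Henstock_Kurzweil_Integration.content k *\<^sub>R (\<phi> x * h x)) - (\<Phi> t - \<Phi> 0)
          = (\<Sum>(x,K)\<in>D. \<phi> x * (Henstock_Kurzweil_Integration.content K * h x - integral K h))
            + (\<Sum>(x,K)\<in>D. \<phi> x * integral K h - (\<Phi> (Sup K) - \<Phi> (Inf K)))"
        unfolding piece tel[symmetric] by (simp add: split_def sum.distrib sum_subtractf)
      then show "norm ((\<Sum>(x, k)\<in>D. Henstock_Kurzweil_Integration.content k *\<^sub>R (\<phi> x * h x)) - (\<Phi> t - \<Phi> 0)) < e"
        using S1 S2 by (simp add: abs_if split: if_splits)
    qed
  qed
qed


lemma iter_int_0_fun [simp]: "iter_int 0 h = h"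
  by (rule ext) simp

lemma iter_int_shift: "iter_int (Suc m) h t = iter_int m (\<lambda>x. integral {0..x} h) t"
proof (induction m arbitrary: t)
  case 0 then show ?case by simp
next
  case (Suc m)
  have "iter_int (Suc (Suc m)) h t = integral {0..t} (\<lambda>s. iter_int (Suc m) h s)" by (rule iter_int.simps(2))
  also have "\<dots> = integral {0..t} (\<lambda>s. iter_int m (\<lambda>x. integral {0..x} h) s)" using Suc.IH by (simp only:)
  also have "\<dots> = iter_int (Suc m) (\<lambda>x. integral {0..x} h) t" by (rule iter_int.simps(2)[symmetric])
  finally show ?case .
qed

lemma cauchy_formula:
  assumes t: "0 \<le> t"
  shows "h integrable_on {0..t} \<Longrightarrow> iter_int (Suc m) h t = integral {0..t} (\<lambda>s. (t - s) ^ m * h s) / fact m"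
proof (induction m arbitrary: h)
  case 0 then show ?case by simp
next
  case (Suc m)
  define H where "H x = integral {0..x} h" for x
  have Hc: "continuous_on {0..t} H" unfolding H_def by (rule indefinite_integral_continuous_1[OF Suc.prems])
  have Hi: "H integrable_on {0..t}" using Hc by (rule integrable_continuous_real)
  have "iter_int (Suc (Suc m)) h t = iter_int (Suc m) H t"
    unfolding iter_int_shift[of "Suc m"] H_def by simp
  also have "\<dots> = integral {0..t} (\<lambda>s. (t - s) ^ m * H s) / fact m" using Suc.IH[OF Hi] .
  finally have e1: "iter_int (Suc (Suc m)) h t = integral {0..t} (\<lambda>s. (t - s) ^ m * H s) / fact m" .
  have dphi: "\<forall>s\<in>{0..t}. ((\<lambda>s. (t - s) ^ Suc m) has_real_derivative (- (real (Suc m) * (t - s) ^ m))) (at s within {0..t})"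
    by (auto intro!: derivative_eq_intros simp del: power_Suc)
  have cphi: "continuous_on {0..t} (\<lambda>s. - (real (Suc m) * (t - s) ^ m))"
    by (intro continuous_intros)
  have "((\<lambda>s. (t - s) ^ Suc m * h s) has_integral
           ((t - t) ^ Suc m * integral {0..t} h - integral {0..t} (\<lambda>s. - (real (Suc m) * (t - s) ^ m) * integral {0..s} h))) {0..t}"
    by (rule hk_parts[OF t Suc.prems dphi cphi])
  then have "integral {0..t} (\<lambda>s. (t - s) ^ Suc m * h s)
       = (t - t) ^ Suc m * integral {0..t} h - integral {0..t} (\<lambda>s. - (real (Suc m) * (t - s) ^ m) * integral {0..s} h)"
    by (rule integral_unique)
  also have "(\<lambda>s. - (real (Suc m) * (t - s) ^ m) * integral {0..s} h) = (\<lambda>s. (- real (Suc m)) * ((t - s) ^ m * H s))"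
    unfolding H_def by (rule ext) (simp add: algebra_simps)
  also have "integral {0..t} (\<lambda>s. (- real (Suc m)) * ((t - s) ^ m * H s)) = (- real (Suc m)) * integral {0..t} (\<lambda>s. (t - s) ^ m * H s)"
    by (rule integral_mult_right)
  also have "(t - t) ^ Suc m * integral {0..t} h - (- real (Suc m)) * integral {0..t} (\<lambda>s. (t - s) ^ m * H s)
      = real (Suc m) * integral {0..t} (\<lambda>s. (t - s) ^ m * H s)" by (simp add: algebra_simps)
  finally have e2: "integral {0..t} (\<lambda>s. (t - s) ^ Suc m * h s) = real (Suc m) * integral {0..t} (\<lambda>s. (t - s) ^ m * H s)" .
  have "real (Suc m) \<noteq> 0" by simp
  then show ?case unfolding e1 e2 fact_Suc[of m]
    by (metis mult_divide_mult_cancel_left)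
qed


lemma per_gamma:
  fixes z c F :: "real \<Rightarrow> real"
  assumes t: "0 \<le> t" and cc: "continuous_on {0..t} c" and conv: "\<forall>a\<in>{0..t}. conv1 z c a (F a)"
  shows "conv1 (\<lambda>s. (t - s) ^ k * z s) c t (fact k * iter_int k F t)"
proof -
  have dphi: "\<forall>s\<in>{0..t}. ((\<lambda>s. (t - s) ^ k) has_real_derivative (- (real k * (t - s) ^ (k - 1)))) (at s within {0..t})"
    by (auto intro!: derivative_eq_intros)
  have cphi: "continuous_on {0..t} (\<lambda>s. - (real k * (t - s) ^ (k - 1)))"
    by (intro continuous_intros)
  have main: "conv1 (\<lambda>s. (t - s) ^ k * z s) c t
      ((t - t) ^ k * F t - integral {0..t} (\<lambda>s. - (real k * (t - s) ^ (k - 1)) * F s))"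
    by (rule liu_main[OF t conv cc dphi cphi])
  have Fc: "continuous_on {0..t} F" by (rule F_cont[OF t conv cc])
  have "(t - t) ^ k * F t - integral {0..t} (\<lambda>s. - (real k * (t - s) ^ (k - 1)) * F s) = fact k * iter_int k F t"
  proof (cases k)
    case 0 then show ?thesis by simp
  next
    case (Suc j)
    have Fi: "F integrable_on {0..t}" using Fc by (rule integrable_continuous_real)
    have fe: "(\<lambda>s. - (real k * (t - s) ^ (k - 1)) * F s) = (\<lambda>s. (- real k) * ((t - s) ^ j * F s))"
      using Suc by (auto simp: algebra_simps)
    have I1: "integral {0..t} (\<lambda>s. - (real k * (t - s) ^ (k - 1)) * F s) = (- real k) * integral {0..t} (\<lambda>s. (t - s) ^ j * F s)"
      unfolding fe by (rule integral_mult_right)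
    have I2: "iter_int k F t = integral {0..t} (\<lambda>s. (t - s) ^ j * F s) / fact j"
      using cauchy_formula[OF t Fi, of j] Suc by simp
    have fj: "fact j \<noteq> (0::real)" by simp
    have fk: "(fact k :: real) = real k * fact j" using Suc by (simp add: fact_Suc)
    have c: "fact k * (J / fact j) = real k * J" for J :: real unfolding fk using fj by simp
    have z: "(t - t) ^ k = (0::real)" using Suc by simp
    show ?thesis unfolding I1 I2 c z by simp
  qed
  then show ?thesis using main by simp
qed

lemma lip_cont:
  fixes c :: "real \<Rightarrow> real"
  assumes "\<forall>s\<ge>0. \<forall>u\<ge>0. \<bar>c s - c u\<bar> \<le> K * \<bar>s - u\<bar>"
  shows "continuous_on {0..t} c"
  unfolding continuous_on_iff
proof (intro ballI allI impI)
  fix x e :: real assume x: "x \<in> {0..t}" and e: "e > 0"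
  show "\<exists>d>0. \<forall>x'\<in>{0..t}. dist x' x < d \<longrightarrow> dist (c x') (c x) < e"
  proof (intro exI[of _ "e / (\<bar>K\<bar> + 1)"] conjI ballI impI)
    show "e / (\<bar>K\<bar> + 1) > 0" using e by simp
    fix y assume y: "y \<in> {0..t}" and d: "dist y x < e / (\<bar>K\<bar> + 1)"
    have "\<bar>c y - c x\<bar> \<le> K * \<bar>y - x\<bar>" using assms x y by auto
    also have "\<dots> \<le> (\<bar>K\<bar> + 1) * \<bar>y - x\<bar>" by (intro mult_right_mono) auto
    also have "\<dots> < (\<bar>K\<bar> + 1) * (e / (\<bar>K\<bar> + 1))" using d
      by (intro mult_strict_left_mono) (auto simp: dist_real_def)
    also have "\<dots> = e" by simp
    finally show "dist (c y) (c x) < e" by (simp add: dist_real_def)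
  qed
qed

lemma meas_int:
  assumes us: "uncertainty_space \<Gamma> L M" and A: "A \<in> L" "M A = 1" and B: "B \<in> L" "M B = 1"
  shows "A \<inter> B \<in> L" "M (A \<inter> B) = 1"
proof -
  have sa: "sigma_algebra \<Gamma> L" and um: "uncertain_measure \<Gamma> L M" using us unfolding uncertainty_space_def by auto
  have alg: "algebra \<Gamma> L" using sa by (rule sigma_algebra.axioms(1))
  have aU: "L \<subseteq> Pow \<Gamma>" "{} \<in> L" "\<forall>a\<in>L. \<Gamma> - a \<in> L" "\<forall>a\<in>L. \<forall>b\<in>L. a \<union> b \<in> L"
    using alg unfolding algebra_iff_Un by auto
  have aI: "\<forall>a\<in>L. \<forall>b\<in>L. a \<inter> b \<in> L"
    using alg unfolding algebra_iff_Int by auto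
  have top: "\<Gamma> \<in> L" using aU by force
  have sub: "X \<in> L \<Longrightarrow> X \<subseteq> \<Gamma>" for X using aU by auto
  have Diff: "X \<in> L \<Longrightarrow> Y \<in> L \<Longrightarrow> X - Y \<in> L" for X Y
  proof -
    assume X: "X \<in> L" and Y: "Y \<in> L"
    have "X - Y = X \<inter> (\<Gamma> - Y)" using sub[OF X] by auto
    then show ?thesis using aI aU X Y by auto
  qed
  show AB: "A \<inter> B \<in> L" using aI A B by auto
  have M1: "M \<Gamma> = 1" and dual: "\<forall>A\<in>L. M A + M (\<Gamma> - A) = 1"
    and csub: "\<forall>A :: nat \<Rightarrow> _ set. (\<forall>i. A i \<in> L) \<longrightarrow> summable (\<lambda>i. M (A i)) \<longrightarrow> M (\<Union>i. A i) \<le> (\<Sum>i. M (A i))"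
    using um unfolding uncertain_measure_def by auto
  have emp: "{} \<in> L" using Diff[OF top top] by simp
  have M0: "M {} = 0" using dual top M1 by auto
  have two: "M (X \<union> Y) \<le> M X + M Y" if X: "X \<in> L" and Y: "Y \<in> L" for X Y
  proof -
    define S where "S i = (if i = 0 then X else if i = 1 then Y else {})" for i :: nat
    have SL: "\<forall>i. S i \<in> L" using X Y emp by (auto simp: S_def)
    have z: "n \<notin> {0, 1} \<Longrightarrow> M (S n) = 0" for n using M0 by (auto simp: S_def)
    have sm: "summable (\<lambda>i. M (S i))" by (rule summable_finite[of "{0,1}"]) (use z in auto)
    have sv: "(\<Sum>i. M (S i)) = M X + M Y" using suminf_finite[of "{0::nat,1}" "\<lambda>i. M (S i)"] z by (simp add: S_def)
    have U: "(\<Union>i. S i) = X \<union> Y"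
    proof
      show "(\<Union>i. S i) \<subseteq> X \<union> Y" by (auto simp: S_def split: if_splits)
      show "X \<union> Y \<subseteq> (\<Union>i. S i)"
      proof
        fix w assume "w \<in> X \<union> Y"
        then show "w \<in> (\<Union>i. S i)"
        proof
          assume "w \<in> X" then show ?thesis by (intro UN_I[of 0]) (auto simp: S_def)
        next
          assume "w \<in> Y" then show ?thesis by (intro UN_I[of 1]) (auto simp: S_def)
        qed
      qed
    qed
    show ?thesis using csub SL sm sv U by metis
  qed
  have nonneg: "0 \<le> M X" if "X \<in> L" for X
  proof -
    have "\<Gamma> \<union> X = \<Gamma>" using sub[OF that] by auto
    then show ?thesis using two[OF top that] M1 by simp
  qed
  have cA: "M (\<Gamma> - A) = 0" "M (\<Gamma> - B) = 0" using dual A B by auto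
  have "\<Gamma> - (A \<inter> B) = (\<Gamma> - A) \<union> (\<Gamma> - B)" by auto
  then have "M (\<Gamma> - (A \<inter> B)) \<le> 0" using two[OF Diff[OF top A(1)] Diff[OF top B(1)]] cA by simp
  moreover have "M (\<Gamma> - (A \<inter> B)) \<ge> 0" using nonneg Diff[OF top AB] by simp
  ultimately have "M (\<Gamma> - (A \<inter> B)) = 0" by simp
  then show "M (A \<inter> B) = 1" using dual AB by force
qed


lemma liu_int_eq:
  assumes "0 \<le> a" "liu_conv Z C a \<gamma> I" shows "liu_int Z C a \<gamma> = I"
  unfolding liu_int_def
proof (rule the_equality)
  show "liu_conv Z C a \<gamma> I" by fact
  fix J assume "liu_conv Z C a \<gamma> J"
  then show "J = I" using conv1_unique[OF assms(1)] assms(2) unfolding liu_conv_conv1 by blast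
qed

theorem lemma3p1:
  fixes \<Gamma> :: "'g set" and L :: "'g set set" and M :: "'g set \<Rightarrow> real"
    and C :: "real \<Rightarrow> 'g \<Rightarrow> real" and n :: nat
    and f g :: "real \<Rightarrow> (nat \<Rightarrow> real) \<Rightarrow> real"
    and x0 :: "nat \<Rightarrow> real" and X :: "real \<Rightarrow> 'g \<Rightarrow> real" and D :: "nat \<Rightarrow> real \<Rightarrow> 'g \<Rightarrow> real"
  assumes "uncertainty_space \<Gamma> L M"
    and "n \<ge> 1"
    and "liu_process \<Gamma> L M C"
    and "cont_Rn n f" and "cont_Rn n g"
    and "\<forall>t \<gamma>. D 0 t \<gamma> = X t \<gamma>"
    and "is_solution \<Gamma> L M C n f g x0 D"
    and "t \<ge> 0"
  shows "liu_integrable L M (\<lambda>s \<gamma>. (t - s) ^ (n - 1) * g s (\<lambda>i. D i s \<gamma>)) C t \<and>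
    (\<exists>A\<in>L. M A = 1 \<and> (\<forall>\<gamma>\<in>A.
       X t \<gamma> = (\<Sum>k<n. t ^ k / fact k * x0 k)
         + 1 / fact (n - 1) * integral {0..t} (\<lambda>s. (t - s) ^ (n - 1) * f s (\<lambda>i. D i s \<gamma>))
         + 1 / fact (n - 1) * liu_int (\<lambda>s \<gamma>. (t - s) ^ (n - 1) * g s (\<lambda>i. D i s \<gamma>)) C t \<gamma>))"
proof -
  have t: "0 \<le> t" by fact
  obtain k where k: "n = Suc k" using assms(2) by (cases n) auto
  obtain A1 where A1: "A1 \<in> L" "M A1 = 1"
    and lip: "\<forall>\<gamma>\<in>A1. \<exists>K. \<forall>s\<ge>0. \<forall>t\<ge>0. \<bar>C s \<gamma> - C t \<gamma>\<bar> \<le> K * \<bar>s - t\<bar>"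
    using assms(3) unfolding liu_process_def by blast
  obtain A2 where A2: "A2 \<in> L" "M A2 = 1" and A2p: "\<forall>\<gamma>\<in>A2.
        (\<forall>a\<in>{0..t}. \<exists>I. liu_conv (\<lambda>s \<gamma>. g s (\<lambda>i. D i s \<gamma>)) C a \<gamma> I) \<and>
        (\<forall>m<n. \<forall>a\<in>{0..t}. (\<lambda>u. iter_int m (\<lambda>s. f s (\<lambda>i. D i s \<gamma>)) u) integrable_on {0..a}) \<and>
        (\<forall>m. Suc m < n \<longrightarrow> (\<forall>a\<in>{0..t}.
            (\<lambda>u. iter_int m (\<lambda>s. liu_int (\<lambda>s \<gamma>. g s (\<lambda>i. D i s \<gamma>)) C s \<gamma>) u) integrable_on {0..a})) \<and>
        D 0 t \<gamma> = (\<Sum>i<n. t ^ i / fact i * x0 i)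
                   + iter_int n (\<lambda>s. f s (\<lambda>i. D i s \<gamma>)) t
                   + iter_int (n - 1) (\<lambda>s. liu_int (\<lambda>s \<gamma>. g s (\<lambda>i. D i s \<gamma>)) C s \<gamma>) t"
    using assms(7) t unfolding is_solution_def by blast
  define A where "A = A1 \<inter> A2"
  have A: "A \<in> L" "M A = 1" unfolding A_def using meas_int[OF assms(1) A1 A2] by auto
  define V where "V \<gamma> = fact k * iter_int k (\<lambda>s. liu_int (\<lambda>s \<gamma>. g s (\<lambda>i. D i s \<gamma>)) C s \<gamma>) t" for \<gamma>
  have key: "liu_conv (\<lambda>s \<gamma>. (t - s) ^ (n - 1) * g s (\<lambda>i. D i s \<gamma>)) C t \<gamma> (V \<gamma>)" if \<gamma>: "\<gamma> \<in> A" for \<gamma>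
  proof -
    obtain K where K: "\<forall>s\<ge>0. \<forall>u\<ge>0. \<bar>C s \<gamma> - C u \<gamma>\<bar> \<le> K * \<bar>s - u\<bar>" using lip \<gamma> unfolding A_def by blast
    have cc: "continuous_on {0..t} (\<lambda>s. C s \<gamma>)" by (rule lip_cont[OF K])
    have conv: "\<forall>a\<in>{0..t}. conv1 (\<lambda>s. g s (\<lambda>i. D i s \<gamma>)) (\<lambda>s. C s \<gamma>) a
                   ((\<lambda>s. liu_int (\<lambda>s \<gamma>. g s (\<lambda>i. D i s \<gamma>)) C s \<gamma>) a)"
    proof
      fix a assume a: "a \<in> {0..t}"
      obtain I where I: "liu_conv (\<lambda>s \<gamma>. g s (\<lambda>i. D i s \<gamma>)) C a \<gamma> I" using A2p \<gamma> a unfolding A_def by blast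
      have "liu_int (\<lambda>s \<gamma>. g s (\<lambda>i. D i s \<gamma>)) C a \<gamma> = I" using liu_int_eq[OF _ I] a by auto
      then show "conv1 (\<lambda>s. g s (\<lambda>i. D i s \<gamma>)) (\<lambda>s. C s \<gamma>) a
                   ((\<lambda>s. liu_int (\<lambda>s \<gamma>. g s (\<lambda>i. D i s \<gamma>)) C s \<gamma>) a)"
        using I unfolding liu_conv_conv1 by simp
    qed
    have "conv1 (\<lambda>s. (t - s) ^ k * g s (\<lambda>i. D i s \<gamma>)) (\<lambda>s. C s \<gamma>) t (V \<gamma>)"
      unfolding V_def by (rule per_gamma[OF t cc conv])
    then show ?thesis unfolding liu_conv_conv1 k by simp
  qed
  show ?thesis
  proof (intro conjI bexI[of _ A] ballI)
    show "liu_integrable L M (\<lambda>s \<gamma>. (t - s) ^ (n - 1) * g s (\<lambda>i. D i s \<gamma>)) C t"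
      unfolding liu_integrable_def using A key by blast
    show "A \<in> L" "M A = 1" by (rule A)+
    fix \<gamma> assume \<gamma>: "\<gamma> \<in> A"
    have li: "liu_int (\<lambda>s \<gamma>. (t - s) ^ (n - 1) * g s (\<lambda>i. D i s \<gamma>)) C t \<gamma> = V \<gamma>"
      by (rule liu_int_eq[OF t key[OF \<gamma>]])
    have hp: "\<gamma> \<in> A2" using \<gamma> unfolding A_def by blast
    have hi: "(\<lambda>s. f s (\<lambda>i. D i s \<gamma>)) integrable_on {0..t}"
      using A2p hp t k by fastforce
    have cf: "iter_int n (\<lambda>s. f s (\<lambda>i. D i s \<gamma>)) t
        = integral {0..t} (\<lambda>s. (t - s) ^ k * f s (\<lambda>i. D i s \<gamma>)) / fact k"
      unfolding k by (rule cauchy_formula[OF t hi])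
    have eqD: "D 0 t \<gamma> = (\<Sum>i<n. t ^ i / fact i * x0 i)
                   + iter_int n (\<lambda>s. f s (\<lambda>i. D i s \<gamma>)) t
                   + iter_int (n - 1) (\<lambda>s. liu_int (\<lambda>s \<gamma>. g s (\<lambda>i. D i s \<gamma>)) C s \<gamma>) t"
      using A2p hp by blast
    have fk: "fact k \<noteq> (0::real)" by simp
    show "X t \<gamma> = (\<Sum>k<n. t ^ k / fact k * x0 k)
         + 1 / fact (n - 1) * integral {0..t} (\<lambda>s. (t - s) ^ (n - 1) * f s (\<lambda>i. D i s \<gamma>))
         + 1 / fact (n - 1) * liu_int (\<lambda>s \<gamma>. (t - s) ^ (n - 1) * g s (\<lambda>i. D i s \<gamma>)) C t \<gamma>"
      unfolding li V_def using eqD[unfolded cf] assms(6) fk by (simp add: k)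
  qed
qed

end
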